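(* Let $G=(V,E,\Omega)$ be a connected finite graph with vertex set $V\subset\mathbb{R}^n$, edge set $E$ and a non-empty set $\Omega\subset V$, and let $f:\Omega\to\mathbb{R}^m$. Let $u\in E(f)$ and $x\in V\setminus\Omega$. Define $v:V\to\mathbb{R}^m$ by $v(y)=u(y)$ for $y\in V\setminus\{x\}$ and $v(x)=K(u,S(x))(x)$. If $K(u,S(x))(x)\neq u(x)$, then $v$ is tighter than $u$ on $G$.
   Context: For $x\in V$, $S(x):=\{y\in V:(x,y)\in E\}$ is the neighborhood of $x$ in $G$. $E(f)$ denotes the set of all extensions of $f$ to $V$, i.e. functions $V\to\mathbb{R}^m$ agreeing with $f$ on $\Omega$; $\|\cdot\|$ is the Euclidean norm. For a finite set $A\subset\mathbb{R}^n$, a map $g:A\to\mathbb{R}^m$ and $x\in\mathbb{R}^n\setminus A$, there is a unique $y\in\mathbb{R}^m$ minimizing $\sup_{a\in A}\|g(a)-y\|/\|a-x\|$; this minimizer is denoted $K(g,A)(x)$ (the Kirszbraun value of $g$ restricted to $A$ at $x$). For $w\in E(f)$ and $x\in V\setminus\Omega$, the local Lipschitz constant is $Lw(x):=\sup_{y\in S(x)}\|w(y)-w(x)\|/\|y-x\|$. For $u,v\in E(f)$, $v$ is tighter than $u$ on $G$ if $\max\{Lu(x):Lu(x)>Lv(x),\,x\in V\setminus\Omega\}>\max\{Lv(x):Lv(x)>Lu(x),\,x\in V\setminus\Omega\}$, with the convention that the maximum over the empty set is $0$. *)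

theory Defs
  imports "HOL-Analysis.Analysis"
begin

definition connected_graph :: "'a set \<Rightarrow> ('a \<times> 'a) set \<Rightarrow> bool" where
  "connected_graph V E \<longleftrightarrow> finite V \<and> E \<subseteq> V \<times> V \<and> sym E \<and> irrefl E
     \<and> (\<forall>a\<in>V. \<forall>b\<in>V. (a, b) \<in> E\<^sup>*)"

definition nbhd :: "'a set \<Rightarrow> ('a \<times> 'a) set \<Rightarrow> 'a \<Rightarrow> 'a set" where
  "nbhd V E x = {y \<in> V. (x, y) \<in> E}"

definition extensions :: "'a set \<Rightarrow> ('a \<Rightarrow> 'b) \<Rightarrow> ('a \<Rightarrow> 'b) set" where
  "extensions \<Omega> f = {w. \<forall>y\<in>\<Omega>. w y = f y}"

definition kirszbraun_value :: "('a::euclidean_space \<Rightarrow> 'b::euclidean_space) \<Rightarrow> 'a set \<Rightarrow> 'a \<Rightarrow> 'b" where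
  "kirszbraun_value g A x =
     (THE y. \<forall>z. (SUP a\<in>A. norm (g a - y) / norm (a - x))
                \<le> (SUP a\<in>A. norm (g a - z) / norm (a - x)))"

definition local_lip :: "'a set \<Rightarrow> ('a \<times> 'a) set \<Rightarrow> ('a::euclidean_space \<Rightarrow> 'b::euclidean_space) \<Rightarrow> 'a \<Rightarrow> real" where
  "local_lip V E w x = (SUP y\<in>nbhd V E x. norm (w y - w x) / norm (y - x))"

definition max0 :: "real set \<Rightarrow> real" where
  "max0 A = (if A = {} then 0 else Max A)"

definition tighter :: "'a set \<Rightarrow> ('a \<times> 'a) set \<Rightarrow> 'a set \<Rightarrow> ('a::euclidean_space \<Rightarrow> 'b::euclidean_space) \<Rightarrow> ('a \<Rightarrow> 'b) \<Rightarrow> bool" where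
  "tighter V E \<Omega> v u \<longleftrightarrow>
     max0 {local_lip V E u x | x. x \<in> V - \<Omega> \<and> local_lip V E u x > local_lip V E v x}
     > max0 {local_lip V E v x | x. x \<in> V - \<Omega> \<and> local_lip V E v x > local_lip V E u x}"

end

theory Submission imports Defs begin

lemma mid_strict:
  fixes p q :: "'b::real_inner"
  assumes "norm p \<le> s" "norm q \<le> s" "p \<noteq> q"
  shows "norm ((1/2) *\<^sub>R (p + q)) < s"
proof -
  have pl: "(norm (p+q))\<^sup>2 + (norm (p-q))\<^sup>2 = 2*(norm p)\<^sup>2 + 2*(norm q)\<^sup>2"
    by (simp add: power2_norm_eq_inner inner_add_left inner_add_right inner_diff_left inner_diff_right inner_commute)
  have "norm (p - q) > 0" using assms(3) by simp
  hence h0: "(norm (p-q))\<^sup>2 > 0" by simp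
  moreover have "(norm p)\<^sup>2 \<le> s\<^sup>2" "(norm q)\<^sup>2 \<le> s\<^sup>2"
    using assms(1,2) by (auto intro: power_mono)
  ultimately have "(norm (p+q))\<^sup>2 < 4 * (s * s)" using pl h0 unfolding power2_eq_square by linarith
  hence "norm (p+q) < 2 * s"
  proof -
    have "(norm (p+q))\<^sup>2 < (2 * s)\<^sup>2" using \<open>(norm (p+q))\<^sup>2 < 4 * (s * s)\<close>
      unfolding power2_eq_square by (simp add: algebra_simps)
    moreover have "0 \<le> 2 * s" using assms(1) norm_ge_zero[of p] by linarith
    ultimately show ?thesis by (rule power2_less_imp_less)
  qed
  thus ?thesis by simp
qed

lemma sup_max_cont:
  fixes g :: "'a \<Rightarrow> 'b::real_normed_vector \<Rightarrow> real"
  assumes "finite A" "A \<noteq> {}" "\<And>a. a \<in> A \<Longrightarrow> continuous_on UNIV (g a)"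
  shows "continuous_on UNIV (\<lambda>y. SUP a\<in>A. g a y)"
  using assms
proof (induction A rule: finite_ne_induct)
  case (singleton a) thus ?case by simp
next
  case (insert a F)
  have "(\<lambda>y. SUP b\<in>insert a F. g b y) = (\<lambda>y. max (g a y) (SUP b\<in>F. g b y))"
    using insert by (simp add: cSup_insert_If sup_max)
  moreover have "continuous_on UNIV (\<lambda>y. max (g a y) (SUP b\<in>F. g b y))"
    using insert by (intro continuous_on_max) auto
  ultimately show ?case by metis
qed


lemma phi_nonneg:
  fixes g :: "'a::euclidean_space \<Rightarrow> 'b::euclidean_space"
  assumes "finite A" "A \<noteq> {}"
  shows "0 \<le> (SUP a\<in>A. norm (g a - y) / norm (a - x))"
proof -
  obtain a where "a \<in> A" using assms by auto
  hence "norm (g a - y) / norm (a - x) \<le> (SUP a\<in>A. norm (g a - y) / norm (a - x))"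
    using assms by (intro cSUP_upper) auto
  moreover have "0 \<le> norm (g a - y) / norm (a - x)" by simp
  ultimately show ?thesis by linarith
qed

lemma phi_exists:
  fixes g :: "'a::euclidean_space \<Rightarrow> 'b::euclidean_space"
  assumes "finite A" "A \<noteq> {}" "x \<notin> A"
  shows "\<exists>y. \<forall>z. (SUP a\<in>A. norm (g a - y) / norm (a - x)) \<le> (SUP a\<in>A. norm (g a - z) / norm (a - x))"
proof -
  define \<phi> where "\<phi> y = (SUP a\<in>A. norm (g a - y) / norm (a - x))" for y
  have cont: "continuous_on UNIV \<phi>"
    unfolding \<phi>_def using assms by (intro sup_max_cont) (auto intro!: continuous_intros)
  obtain a0 where a0: "a0 \<in> A" using assms by auto
  define d0 where "d0 = norm (a0 - x)"
  have d0: "d0 > 0" using a0 assms(3) unfolding d0_def by auto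
  define R where "R = norm (g a0) + d0 * \<phi> 0 + 1"
  have p0: "\<phi> 0 \<ge> 0" unfolding \<phi>_def by (rule phi_nonneg[OF assms(1,2)])
  have R1: "R \<ge> 1" unfolding R_def using d0 p0 by simp
  have "continuous_on (cball 0 R) \<phi>" using cont by (rule continuous_on_subset) auto
  then obtain y where y: "y \<in> cball 0 R" "\<forall>z\<in>cball 0 R. \<phi> y \<le> \<phi> z"
    using continuous_attains_inf[of "cball 0 R" \<phi>] R1 by auto
  have "\<phi> y \<le> \<phi> z" for z
  proof (cases "z \<in> cball 0 R")
    case True thus ?thesis using y by auto
  next
    case False
    hence nz: "norm z > R" by auto
    have "norm (g a0 - z) / d0 \<le> \<phi> z"
      unfolding \<phi>_def d0_def using assms a0 by (intro cSUP_upper) auto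
    moreover have "norm (g a0 - z) \<ge> norm z - norm (g a0)"
      by (metis norm_minus_commute norm_triangle_ineq2)
    hence "norm (g a0 - z) > d0 * \<phi> 0" using nz unfolding R_def by linarith
    hence "norm (g a0 - z) / d0 > \<phi> 0" using d0 by (simp add: field_simps)
    moreover have "\<phi> y \<le> \<phi> 0" using y R1 by auto
    ultimately show ?thesis by linarith
  qed
  thus ?thesis unfolding \<phi>_def by blast
qed

lemma phi_unique:
  fixes g :: "'a::euclidean_space \<Rightarrow> 'b::euclidean_space"
  assumes "finite A" "A \<noteq> {}" "x \<notin> A"
    and m1: "\<forall>z. (SUP a\<in>A. norm (g a - y1) / norm (a - x)) \<le> (SUP a\<in>A. norm (g a - z) / norm (a - x))"
    and m2: "\<forall>z. (SUP a\<in>A. norm (g a - y2) / norm (a - x)) \<le> (SUP a\<in>A. norm (g a - z) / norm (a - x))"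
  shows "y1 = y2"
proof (rule ccontr)
  assume ne: "y1 \<noteq> y2"
  define \<phi> where "\<phi> y = (SUP a\<in>A. norm (g a - y) / norm (a - x))" for y
  define m where "m = (1/2) *\<^sub>R (y1 + y2)"
  define r where "r = \<phi> y1"
  have r2: "\<phi> y2 = r" using m1 m2 unfolding r_def \<phi>_def by (meson order_antisym)
  have le: "norm (g a - y) \<le> \<phi> y * norm (a - x)" if "a \<in> A" for a y
  proof -
    have "norm (g a - y) / norm (a - x) \<le> \<phi> y"
      unfolding \<phi>_def using assms that by (intro cSUP_upper) auto
    moreover have "norm (a - x) > 0" using that assms(3) by auto
    ultimately show ?thesis by (simp add: field_simps)
  qed
  have lt: "norm (g a - m) / norm (a - x) < r" if "a \<in> A" for a
  proof -
    have dpos: "norm (a - x) > 0" using that assms(3) by auto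
    have "g a - m = (1/2) *\<^sub>R ((g a - y1) + (g a - y2))"
      unfolding m_def by (simp add: scaleR_add_right scaleR_diff_right) (simp add: scaleR_2[symmetric] algebra_simps)
    moreover have "norm ((1/2) *\<^sub>R ((g a - y1) + (g a - y2))) < r * norm (a - x)"
      using le[OF that, of y1] le[OF that, of y2] ne r2 unfolding r_def
      by (intro mid_strict) auto
    ultimately show ?thesis using dpos by (simp add: field_simps)
  qed
  have fin: "finite ((\<lambda>a. norm (g a - m) / norm (a - x)) ` A)" using assms by auto
  have "\<phi> m \<in> (\<lambda>a. norm (g a - m) / norm (a - x)) ` A"
    unfolding \<phi>_def using cSup_eq_Max[OF fin] Max_in[OF fin] assms(2) by auto
  hence "\<phi> m < r" using lt by auto
  moreover have "r \<le> \<phi> m" using m1 unfolding r_def \<phi>_def by auto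
  ultimately show False by linarith
qed


theorem mainTheorem1:
  fixes V :: "'a::euclidean_space set" and E :: "('a \<times> 'a) set" and \<Omega> :: "'a set"
    and f u :: "'a \<Rightarrow> 'b::euclidean_space" and x :: 'a
  assumes "connected_graph V E"
    and "\<Omega> \<subseteq> V" and "\<Omega> \<noteq> {}"
    and "u \<in> extensions \<Omega> f"
    and "x \<in> V - \<Omega>"
    and "kirszbraun_value u (nbhd V E x) x \<noteq> u x"
  shows "tighter V E \<Omega> (u(x := kirszbraun_value u (nbhd V E x) x)) u"
proof -
  note cg = assms(1)[unfolded connected_graph_def]
  have finV: "finite V" and EV: "E \<subseteq> V \<times> V" and symE: "sym E" and irr: "irrefl E"
    and conn: "\<forall>a\<in>V. \<forall>b\<in>V. (a, b) \<in> E\<^sup>*" using cg by auto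
  define S where "S = nbhd V E x"
  define K where "K = kirszbraun_value u S x"
  define v where "v = u(x := K)"
  define \<phi> where "\<phi> y = (SUP a\<in>S. norm (u a - y) / norm (a - x))" for y
  have xV: "x \<in> V" and xO: "x \<notin> \<Omega>" using assms(5) by auto
  have finS: "finite S" unfolding S_def nbhd_def using finV by auto
  have xS: "x \<notin> S" unfolding S_def nbhd_def using irr by (auto simp: irrefl_def)
  have Sne: "S \<noteq> {}"
  proof -
    obtain w where w: "w \<in> \<Omega>" using assms(3) by auto
    hence wx: "w \<noteq> x" "w \<in> V" using xO assms(2) by auto
    hence "(x, w) \<in> E\<^sup>*" using conn xV by auto
    then obtain y where "(x, y) \<in> E" using wx(1) by (cases rule: converse_rtranclE) auto
    hence "y \<in> S" unfolding S_def nbhd_def using EV by auto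
    thus ?thesis by auto
  qed
  have ex1: "\<exists>!y. \<forall>z. \<phi> y \<le> \<phi> z"
    using phi_exists[OF finS Sne xS, of u] phi_unique[OF finS Sne xS, of u] unfolding \<phi>_def
    by blast
  have Kmin: "\<forall>z. \<phi> K \<le> \<phi> z"
    using theI'[OF ex1] unfolding K_def kirszbraun_value_def \<phi>_def by simp
  have Kne: "K \<noteq> u x" using assms(6) unfolding K_def S_def by simp
  have Klt: "\<phi> K < \<phi> (u x)"
  proof -
    have "\<phi> K \<le> \<phi> (u x)" using Kmin by auto
    moreover have "\<phi> K \<noteq> \<phi> (u x)"
    proof
      assume eq: "\<phi> K = \<phi> (u x)"
      hence "\<forall>z. \<phi> (u x) \<le> \<phi> z" using Kmin by simp
      hence "u x = K" using Kmin phi_unique[OF finS Sne xS, of u "u x" K] unfolding \<phi>_def by blast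
      thus False using Kne by simp
    qed
    ultimately show ?thesis by simp
  qed
  have Lux: "local_lip V E u x = \<phi> (u x)"
    unfolding local_lip_def \<phi>_def S_def by simp
  have Lvx: "local_lip V E v x = \<phi> K"
    unfolding local_lip_def \<phi>_def S_def[symmetric]
  proof (rule SUP_cong)
    fix y assume "y \<in> S"
    hence "y \<noteq> x" using xS by auto
    thus "norm (v y - v x) / norm (y - x) = norm (u y - K) / norm (y - x)"
      unfolding v_def by simp
  qed simp
  have phiK0: "0 \<le> \<phi> K" unfolding \<phi>_def by (rule phi_nonneg[OF finS Sne])
  have key: "local_lip V E v z \<le> \<phi> K"
    if z: "z \<in> V" "z \<noteq> x" "local_lip V E v z > local_lip V E u z" for z
  proof -
    define Sz where "Sz = nbhd V E z"
    have finSz: "finite Sz" unfolding Sz_def nbhd_def using finV by auto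
    have vz: "v z = u z" unfolding v_def using z by simp
    have Szne: "Sz \<noteq> {}"
    proof
      assume "Sz = {}"
      hence "local_lip V E v z = local_lip V E u z" unfolding local_lip_def Sz_def[symmetric] by simp
      thus False using z by simp
    qed
    have "local_lip V E v z \<le> max (local_lip V E u z) (\<phi> K)"
      unfolding local_lip_def Sz_def[symmetric]
    proof (rule cSUP_least[OF Szne])
      fix y assume y: "y \<in> Sz"
      show "norm (v y - v z) / norm (y - z) \<le> max (SUP y\<in>Sz. norm (u y - u z) / norm (y - z)) (\<phi> K)"
      proof (cases "y = x")
        case True
        have "(x, z) \<in> E" using y True unfolding Sz_def nbhd_def using symE by (auto simp: sym_def)
        hence "z \<in> S" unfolding S_def nbhd_def using z by auto
        hence "norm (u z - K) / norm (z - x) \<le> \<phi> K"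
          unfolding \<phi>_def using finS by (intro cSUP_upper) auto
        moreover have "norm (v y - v z) / norm (y - z) = norm (u z - K) / norm (z - x)"
          using True vz unfolding v_def by (simp add: norm_minus_commute)
        ultimately show ?thesis by linarith
      next
        case False
        have "norm (u y - u z) / norm (y - z) \<le> (SUP y\<in>Sz. norm (u y - u z) / norm (y - z))"
          using y finSz by (intro cSUP_upper) auto
        moreover have "norm (v y - v z) / norm (y - z) = norm (u y - u z) / norm (y - z)"
          using False vz unfolding v_def by simp
        ultimately show ?thesis by linarith
      qed
    qed
    thus ?thesis using z(3) unfolding local_lip_def Sz_def[symmetric] by linarith
  qed
  define A1 where "A1 = {local_lip V E u z | z. z \<in> V - \<Omega> \<and> local_lip V E u z > local_lip V E v z}"
  define A2 where "A2 = {local_lip V E v z | z. z \<in> V - \<Omega> \<and> local_lip V E v z > local_lip V E u z}"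
  have finA1: "finite A1" unfolding A1_def using finV by (intro finite_image_set) auto
  have finA2: "finite A2" unfolding A2_def using finV by (intro finite_image_set) auto
  have inA1: "local_lip V E u x \<in> A1" unfolding A1_def using xV xO Lux Lvx Klt by (intro CollectI exI[of _ x]) auto
  have m1: "max0 A1 \<ge> \<phi> (u x)" unfolding max0_def using inA1 finA1 Lux by auto
  have m2: "max0 A2 < \<phi> (u x)"
  proof (cases "A2 = {}")
    case True thus ?thesis unfolding max0_def using phiK0 Klt by simp
  next
    case False
    have "Max A2 \<in> A2" using Max_in[OF finA2 False] .
    then obtain z where z: "Max A2 = local_lip V E v z" "z \<in> V" "z \<notin> \<Omega>"
      "local_lip V E v z > local_lip V E u z" unfolding A2_def by auto
    have "z \<noteq> x" using z(4) Lux Lvx Klt by auto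
    hence "Max A2 \<le> \<phi> K" using key[OF z(2) _ z(4)] z(1) by simp
    thus ?thesis unfolding max0_def using False Klt by simp
  qed
  show ?thesis unfolding tighter_def v_def[symmetric] K_def[symmetric] S_def[symmetric]
    using m1 m2 unfolding A1_def A2_def by linarith
qed

end
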